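(* Let $\mathbf{SpFibPreord}$ denote the category whose objects are spatial fibrous preorders and whose morphisms are fibrous morphisms between them, two parallel fibrous morphisms $(f,f^* )$, $(g,g^* )$ being identified whenever $f=g$. Let $\mathbf{Top}$ be the category of topological spaces and continuous maps. Define $F\colon \mathbf{SpFibPreord}\to\mathbf{Top}$ as follows. For a spatial fibrous preorder $R\xrightarrow{\partial}A\xrightarrow{p}B$, let $F$ of it be $(B,\tau)$, where for $a\in A$ we set $N(a)=\{y\in B\mid aRy\}$ and $$\mathcal{O}\in\tau \iff \forall y\in\mathcal{O}\ \exists a\in A \text{ with } p(a)=y \text{ and } N(a)\subseteq\mathcal{O}.$$ For a morphism $(f,f^* )$, set $F(f,f^* )=f$. Define $G\colon\mathbf{Top}\to\mathbf{SpFibPreord}$ as follows. For a topological space $(B,\tau)$, let $G(B,\tau)$ be the fibrous preorder with $$A=\{(U,x)\mid x\in U\in\tau\},\qquad p(U,x)=x,\qquad (U,x)Ry\iff y\in U,\qquad \partial((U,x),y)=(U,y).$$ It is spatial via $s(x)=(B,x)$ and $m((U,x),(V,x))=(U\cap V,x)$. For a continuous map $f\colon(B,\tau)\to(B',\tau')$, let $G(f)=(f,f^* )$ with $f^*((U',x'),y)=(f^{-1}(U'),y)$ whenever $x'=f(y)$. Then $F$ and $G$ are well-defined functors, $FG=1_{\mathbf{Top}}$ (that is, $F(G(B,\tau))=(B,\tau)$ for every topological space), and $GF\sim 1$: for every spatial fibrous preorder $\mathbf{A}$, $GF(\mathbf{A})$ is equivalent to $\mathbf{A}$.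
   Context: A fibrous preorder is a sequence $R\xrightarrow{\partial}A\xrightarrow{p}B$ consisting of the following data: - sets $A$ and $B$; - a map $p\colon A\to B$; - a relation $R\subseteq A\times B$ (write $aRb$ for $(a,b)\in R$); - a map $\partial\colon R\to A$. These must satisfy, for all $a\in A$ and $b,y\in B$ with $aRb$: - (F1) $p\partial(a,b)=b$; - (F2) $aRp(a)$ (this holds for all $a\in A$); - (F3) $\partial(a,b)Ry\Rightarrow aRy$. Such a fibrous preorder is called spatial if there exist maps $s\colon B\to A$ and $m\colon A\times_BA\to A$, where $A\times_BA=\{(a,a')\in A\times A\mid p(a)=p(a')\}$, such that for all $a,a'\in A$ with $p(a)=p(a')$ and all $y\in B$: - (F4) $ps(y)=y$; - (F5) $pm(a,a')=p(a)$; - (F6) $m(a,a')Ry\Rightarrow (aRy \text{ and } a'Ry)$. Spatiality is a property; $s$ and $m$ are not part of the data. Given fibrous preorders $\mathbf{A}=(R,A,B,p,\partial)$ and $\mathbf{A}'=(R',A',B',p',\partial')$, a fibrous morphism $\mathbf{A}\to\mathbf{A}'$ is a pair $(f,f^* )$ with $f\colon B\to B'$ a map and $f^*\colon A'_f\to A$ a map, where $A'_f=\{(a',b)\in A'\times B\mid p'(a')=f(b)\}$. These must satisfy, for all $(a',b)\in A'_f$ and $y\in B$: - $pf^*(a',b)=b$; - $f^*(a',b)Ry\Rightarrow a'R'f(y)$. Composition is $(g,g^* )\circ(f,f^* )=(gf,h)$ with $h(a'',b)=f^*(g^*(a'',f(b)),b)$. Two fibrous preorders $(R,A,B,p,\partial)$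 and $(R',A',B',p',\partial')$ are equivalent if $B=B'$ and the identity map $1_B$ underlies a fibrous morphism in each direction. Equivalently: $B=B'$ and there exist maps $\varphi\colon A\to A'$ and $\gamma\colon A'\to A$ with $p'\varphi=p$ and $p\gamma=p'$ such that, for all $a\in A$, $a'\in A'$ and $b\in B$, $\varphi(a)R'b\Rightarrow aRb$ and $\gamma(a')Rb\Rightarrow a'R'b$. *)

theory Defs
  imports "HOL-Analysis.Analysis"
begin

text \<open>A fibrous preorder R --d--> A --p--> B, with carriers A, B given as sets.
  The relation R is a predicate on 'a x 'b, required to be contained in A x B.\<close>
record ('a, 'b) fpo =
  Acar :: "'a set"
  Bcar :: "'b set"
  proj :: "'a \<Rightarrow> 'b"
  rel  :: "'a \<Rightarrow> 'b \<Rightarrow> bool"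
  bd   :: "'a \<Rightarrow> 'b \<Rightarrow> 'a"

definition fibrous_preorder :: "('a, 'b) fpo \<Rightarrow> bool" where
  "fibrous_preorder P \<longleftrightarrow>
     (\<forall>a\<in>Acar P. proj P a \<in> Bcar P) \<and>
     (\<forall>a b. rel P a b \<longrightarrow> a \<in> Acar P \<and> b \<in> Bcar P) \<and>
     (\<forall>a b. rel P a b \<longrightarrow> bd P a b \<in> Acar P) \<and>
     (\<forall>a b. rel P a b \<longrightarrow> proj P (bd P a b) = b) \<and>
     (\<forall>a\<in>Acar P. rel P a (proj P a)) \<and>
     (\<forall>a b y. rel P a b \<longrightarrow> y \<in> Bcar P \<longrightarrow> rel P (bd P a b) y \<longrightarrow> rel P a y)"

definition spatial :: "('a, 'b) fpo \<Rightarrow> bool" where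
  "spatial P \<longleftrightarrow> fibrous_preorder P \<and>
     (\<exists>s m.
        (\<forall>y\<in>Bcar P. s y \<in> Acar P \<and> proj P (s y) = y) \<and>
        (\<forall>a\<in>Acar P. \<forall>a'\<in>Acar P. proj P a = proj P a' \<longrightarrow>
            m a a' \<in> Acar P \<and> proj P (m a a') = proj P a \<and>
            (\<forall>y\<in>Bcar P. rel P (m a a') y \<longrightarrow> rel P a y \<and> rel P a' y)))"

text \<open>Fibrous morphism (f, fs) : P -> P'; fs is the map on A'_f, given by its values on
  pairs (a', b) with a' in A', b in B, p'(a') = f(b).\<close>
definition fib_morphism ::
  "('a, 'b) fpo \<Rightarrow> ('c, 'd) fpo \<Rightarrow> ('b \<Rightarrow> 'd) \<Rightarrow> ('c \<Rightarrow> 'b \<Rightarrow> 'a) \<Rightarrow> bool" where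
  "fib_morphism P P' f fs \<longleftrightarrow>
     (\<forall>b\<in>Bcar P. f b \<in> Bcar P') \<and>
     (\<forall>a'\<in>Acar P'. \<forall>b\<in>Bcar P. proj P' a' = f b \<longrightarrow>
        fs a' b \<in> Acar P \<and> proj P (fs a' b) = b \<and>
        (\<forall>y\<in>Bcar P. rel P (fs a' b) y \<longrightarrow> rel P' a' (f y)))"

definition fib_equiv :: "('a, 'b) fpo \<Rightarrow> ('c, 'b) fpo \<Rightarrow> bool" where
  "fib_equiv P P' \<longleftrightarrow> Bcar P = Bcar P' \<and>
     (\<exists>fs. fib_morphism P P' id fs) \<and> (\<exists>gs. fib_morphism P' P id gs)"

definition F_open :: "('a, 'b) fpo \<Rightarrow> 'b set \<Rightarrow> bool" where
  "F_open P W \<longleftrightarrow> W \<subseteq> Bcar P \<and>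
     (\<forall>y\<in>W. \<exists>a\<in>Acar P. proj P a = y \<and> {z \<in> Bcar P. rel P a z} \<subseteq> W)"

definition F_top :: "('a, 'b) fpo \<Rightarrow> 'b topology" where
  "F_top P = topology (F_open P)"

definition G_obj :: "'b topology \<Rightarrow> ('b set \<times> 'b, 'b) fpo" where
  "G_obj X = \<lparr> Acar = {(U, x). openin X U \<and> x \<in> U},
               Bcar = topspace X,
               proj = snd,
               rel = (\<lambda>(U, x) y. openin X U \<and> x \<in> U \<and> y \<in> U),
               bd = (\<lambda>(U, x) y. (U, y)) \<rparr>"

definition G_mor :: "'b topology \<Rightarrow> ('b \<Rightarrow> 'd) \<Rightarrow> ('d set \<times> 'd) \<Rightarrow> 'b \<Rightarrow> ('b set \<times> 'b)" where
  "G_mor X f = (\<lambda>(U', x') y. (f -` U' \<inter> topspace X, y))"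

end

theory Submission
  imports Defs
begin

lemma spatialE:
  assumes "spatial P"
  obtains s m where "fibrous_preorder P"
    "\<And>y. y\<in>Bcar P \<Longrightarrow> s y \<in> Acar P \<and> proj P (s y) = y"
    "\<And>a a'. a\<in>Acar P \<Longrightarrow> a'\<in>Acar P \<Longrightarrow> proj P a = proj P a' \<Longrightarrow>
            m a a' \<in> Acar P \<and> proj P (m a a') = proj P a \<and>
            (\<forall>y\<in>Bcar P. rel P (m a a') y \<longrightarrow> rel P a y \<and> rel P a' y)"
  using assms unfolding spatial_def by metis

lemma F_istop:
  assumes "spatial P"
  shows "istopology (F_open P)"
proof -
  from assms obtain s m where
    m: "\<And>a a'. a\<in>Acar P \<Longrightarrow> a'\<in>Acar P \<Longrightarrow> proj P a = proj P a' \<Longrightarrow>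
            m a a' \<in> Acar P \<and> proj P (m a a') = proj P a \<and>
            (\<forall>y\<in>Bcar P. rel P (m a a') y \<longrightarrow> rel P a y \<and> rel P a' y)"
    by (rule spatialE) metis
  show ?thesis unfolding istopology_def
  proof (intro conjI allI impI)
    fix S T assume S: "F_open P S" and T: "F_open P T"
    show "F_open P (S \<inter> T)" unfolding F_open_def
    proof (intro conjI ballI)
      show "S \<inter> T \<subseteq> Bcar P" using S unfolding F_open_def by blast
      fix y assume y: "y \<in> S \<inter> T"
      obtain a1 where a1: "a1 \<in> Acar P" "proj P a1 = y" "{z \<in> Bcar P. rel P a1 z} \<subseteq> S"
        using S y unfolding F_open_def by blast
      obtain a2 where a2: "a2 \<in> Acar P" "proj P a2 = y" "{z \<in> Bcar P. rel P a2 z} \<subseteq> T"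
        using T y unfolding F_open_def by blast
      have mm: "m a1 a2 \<in> Acar P \<and> proj P (m a1 a2) = y \<and>
            (\<forall>z\<in>Bcar P. rel P (m a1 a2) z \<longrightarrow> rel P a1 z \<and> rel P a2 z)"
        using m[OF a1(1) a2(1)] a1(2) a2(2) by simp
      have "{z \<in> Bcar P. rel P (m a1 a2) z} \<subseteq> S \<inter> T"
        using mm a1(3) a2(3) by blast
      then show "\<exists>a\<in>Acar P. proj P a = y \<and> {z \<in> Bcar P. rel P a z} \<subseteq> S \<inter> T"
        using mm by blast
    qed
  next
    fix K assume K: "\<forall>k\<in>K. F_open P k"
    show "F_open P (\<Union>K)" unfolding F_open_def
    proof (intro conjI ballI)
      show "\<Union>K \<subseteq> Bcar P" using K unfolding F_open_def by blast
      fix y assume "y \<in> \<Union>K"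
      then obtain k where k: "k \<in> K" "y \<in> k" by blast
      then obtain a where "a \<in> Acar P" "proj P a = y" "{z \<in> Bcar P. rel P a z} \<subseteq> k"
        using K unfolding F_open_def by blast
      then show "\<exists>a\<in>Acar P. proj P a = y \<and> {z \<in> Bcar P. rel P a z} \<subseteq> \<Union>K"
        using k by blast
    qed
  qed
qed

lemma F_openin: "spatial P \<Longrightarrow> openin (F_top P) = F_open P"
  by (simp add: F_top_def F_istop)

lemma F_topspace:
  assumes "spatial P" shows "topspace (F_top P) = Bcar P"
proof -
  from assms obtain s where
    s: "\<forall>y\<in>Bcar P. s y \<in> Acar P \<and> proj P (s y) = y"
    unfolding spatial_def by blast
  have "F_open P (Bcar P)" unfolding F_open_def using s by blast
  moreover have "\<And>W. F_open P W \<Longrightarrow> W \<subseteq> Bcar P" unfolding F_open_def by blast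
  ultimately show ?thesis unfolding topspace_def F_openin[OF assms] by blast
qed

lemma fp_props:
  assumes "fibrous_preorder P"
  shows "\<And>a. a\<in>Acar P \<Longrightarrow> proj P a \<in> Bcar P"
    "\<And>a b. rel P a b \<Longrightarrow> a \<in> Acar P \<and> b \<in> Bcar P"
    "\<And>a b. rel P a b \<Longrightarrow> bd P a b \<in> Acar P"
    "\<And>a b. rel P a b \<Longrightarrow> proj P (bd P a b) = b"
    "\<And>a. a\<in>Acar P \<Longrightarrow> rel P a (proj P a)"
    "\<And>a b y. rel P a b \<Longrightarrow> y \<in> Bcar P \<Longrightarrow> rel P (bd P a b) y \<Longrightarrow> rel P a y"
  using assms unfolding fibrous_preorder_def by blast+

lemma F_mor:
  assumes P: "spatial P" and P': "spatial P'" and fm: "fib_morphism P P' f fs"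
  shows "continuous_map (F_top P) (F_top P') f"
  unfolding continuous_map F_topspace[OF P] F_topspace[OF P'] F_openin[OF P] F_openin[OF P']
proof (intro conjI allI impI)
  show "f ` Bcar P \<subseteq> Bcar P'" using fm unfolding fib_morphism_def by blast
  fix W assume W: "F_open P' W"
  show "F_open P {x \<in> Bcar P. f x \<in> W}" unfolding F_open_def
  proof (intro conjI ballI)
    show "{x \<in> Bcar P. f x \<in> W} \<subseteq> Bcar P" by blast
    fix y assume y: "y \<in> {x \<in> Bcar P. f x \<in> W}"
    obtain a' where a': "a' \<in> Acar P'" "proj P' a' = f y" "{z \<in> Bcar P'. rel P' a' z} \<subseteq> W"
      using W y unfolding F_open_def by blast
    have fy: "fs a' y \<in> Acar P \<and> proj P (fs a' y) = y \<and>
        (\<forall>z\<in>Bcar P. rel P (fs a' y) z \<longrightarrow> rel P' a' (f z))"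
      using fm a' y unfolding fib_morphism_def by blast
    have "\<forall>z\<in>Bcar P. f z \<in> Bcar P'" using fm unfolding fib_morphism_def by blast
    then have "{z \<in> Bcar P. rel P (fs a' y) z} \<subseteq> {x \<in> Bcar P. f x \<in> W}"
      using fy a'(3) by blast
    then show "\<exists>a\<in>Acar P. proj P a = y \<and> {z \<in> Bcar P. rel P a z} \<subseteq> {x \<in> Bcar P. f x \<in> W}"
      using fy by blast
  qed
qed

lemma G_spatial: "spatial (G_obj X)"
  unfolding spatial_def fibrous_preorder_def G_obj_def
  apply (simp add: split_beta)
  apply (intro conjI)
     apply (meson openin_subset subsetD)
    apply (meson openin_subset subsetD)
   apply (rule exI[of _ "\<lambda>y. (topspace X, y)"])
   apply simp
  apply (rule exI[of _ "\<lambda>a a'. (fst a \<inter> fst a', snd a)"])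
  apply auto
  done

lemma G_mor_ok:
  assumes "continuous_map X Y f"
  shows "fib_morphism (G_obj X) (G_obj Y) f (G_mor X f)"
  using assms unfolding fib_morphism_def G_obj_def G_mor_def continuous_map
  by (auto simp: split_beta vimage_def Int_def conj_commute)

lemma FG_open: "F_open (G_obj X) W \<longleftrightarrow> openin X W"
proof
  assume W: "F_open (G_obj X) W"
  have "\<forall>y\<in>W. \<exists>U. openin X U \<and> y \<in> U \<and> U \<subseteq> W"
  proof
    fix y assume "y \<in> W"
    then obtain a where a: "a \<in> Acar (G_obj X)" "proj (G_obj X) a = y"
        "{z \<in> Bcar (G_obj X). rel (G_obj X) a z} \<subseteq> W"
      using W unfolding F_open_def by blast
    obtain U x where ux: "a = (U, x)" by (cases a)
    have U: "openin X U" "x \<in> U" "x = y" using a unfolding ux G_obj_def by auto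
    have "U \<subseteq> topspace X" using U(1) by (rule openin_subset)
    then have "U \<subseteq> W" using a(3) U unfolding ux G_obj_def by auto
    then show "\<exists>U. openin X U \<and> y \<in> U \<and> U \<subseteq> W" using U by blast
  qed
  then show "openin X W" using openin_subopen by blast
next
  assume W: "openin X W"
  have "W \<subseteq> topspace X" using W by (rule openin_subset)
  then show "F_open (G_obj X) W"
    unfolding F_open_def G_obj_def using W by auto
qed

lemma FG: "F_top (G_obj X) = X"
proof -
  have "F_open (G_obj X) = openin X" using FG_open by blast
  then show ?thesis unfolding F_top_def by (simp add: openin_inverse)
qed

lemma GF:
  assumes P: "spatial P"
  shows "fib_equiv (G_obj (F_top P)) P"
proof -
  have fp: "fibrous_preorder P" using P unfolding spatial_def by blast
  note fpp = fp_props[OF fp]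
  have op: "openin (F_top P) = F_open P" by (rule F_openin[OF P])
  have ts: "topspace (F_top P) = Bcar P" by (rule F_topspace[OF P])
  have Nopen: "F_open P {z \<in> Bcar P. rel P a z}" if a: "a \<in> Acar P" for a
    unfolding F_open_def
  proof (intro conjI ballI)
    show "{z \<in> Bcar P. rel P a z} \<subseteq> Bcar P" by blast
    fix y assume y: "y \<in> {z \<in> Bcar P. rel P a z}"
    then have "bd P a y \<in> Acar P" "proj P (bd P a y) = y"
      "{z \<in> Bcar P. rel P (bd P a y) z} \<subseteq> {z \<in> Bcar P. rel P a z}"
      using fpp(3,4,6) by auto
    then show "\<exists>a'\<in>Acar P. proj P a' = y \<and> {z \<in> Bcar P. rel P a' z} \<subseteq> {z \<in> Bcar P. rel P a z}"
      by blast
  qed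
  have m1: "fib_morphism (G_obj (F_top P)) P id (\<lambda>a b. ({z \<in> Bcar P. rel P a z}, b))"
    unfolding fib_morphism_def G_obj_def using Nopen fpp ts op by auto
  define gs where "gs = (\<lambda>(a'::'b set \<times> 'b) (b::'b).
      SOME a. a \<in> Acar P \<and> proj P a = b \<and> {z \<in> Bcar P. rel P a z} \<subseteq> fst a')"
  have m2: "fib_morphism P (G_obj (F_top P)) id gs"
    unfolding fib_morphism_def
  proof (rule conjI; intro ballI impI)
    fix b assume "b \<in> Bcar P" then show "id b \<in> Bcar (G_obj (F_top P))"
      using ts by (simp add: G_obj_def)
  next
    fix a' b assume a': "a' \<in> Acar (G_obj (F_top P))" and b: "b \<in> Bcar P"
      and pa: "proj (G_obj (F_top P)) a' = id b"
    obtain U x where ux: "a' = (U, x)" by (cases a')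
    have U: "F_open P U" "x \<in> U" "x = b" using a' pa op unfolding ux by (auto simp: G_obj_def)
    then have "\<exists>a. a \<in> Acar P \<and> proj P a = b \<and> {z \<in> Bcar P. rel P a z} \<subseteq> U"
      unfolding F_open_def ux by auto
    then have g: "gs a' b \<in> Acar P \<and> proj P (gs a' b) = b \<and> {z \<in> Bcar P. rel P (gs a' b) z} \<subseteq> U"
      unfolding gs_def ux by (simp only: fst_conv split_beta, rule someI_ex)
    show "gs a' b \<in> Acar P \<and> proj P (gs a' b) = b \<and>
       (\<forall>y\<in>Bcar P. rel P (gs a' b) y \<longrightarrow> rel (G_obj (F_top P)) a' (id y))"
      using g U op unfolding ux by (auto simp: G_obj_def)
  qed
  show ?thesis unfolding fib_equiv_def using m1 m2 ts by (auto simp: G_obj_def)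
qed

theorem mainTheorem1:
  shows
  \<comment> \<open>F well-defined on objects\<close>
  "(\<forall>P :: ('a, 'b) fpo. spatial P \<longrightarrow>
       istopology (F_open P) \<and> topspace (F_top P) = Bcar P)
   \<and> \<comment> \<open>F well-defined on morphisms\<close>
   (\<forall>(P :: ('a, 'b) fpo) (P' :: ('c, 'd) fpo) f fs.
       spatial P \<longrightarrow> spatial P' \<longrightarrow> fib_morphism P P' f fs \<longrightarrow>
       continuous_map (F_top P) (F_top P') f)
   \<and> \<comment> \<open>G well-defined on objects\<close>
   (\<forall>X :: 'b topology. spatial (G_obj X))
   \<and> \<comment> \<open>G well-defined on morphisms\<close>
   (\<forall>(X :: 'b topology) (Y :: 'd topology) f.
       continuous_map X Y f \<longrightarrow> fib_morphism (G_obj X) (G_obj Y) f (G_mor X f))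
   \<and> \<comment> \<open>FG = 1\<close>
   (\<forall>X :: 'b topology. F_top (G_obj X) = X)
   \<and> \<comment> \<open>GF ~ 1\<close>
   (\<forall>P :: ('a, 'b) fpo. spatial P \<longrightarrow> fib_equiv (G_obj (F_top P)) P)"
  using F_istop F_topspace F_mor G_spatial G_mor_ok FG GF by blast

end
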